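(* Let $\mathcal K$ be an abstract Krivine structure, $\mathsf E=\mathsf S(\mathsf K(\mathsf S\mathsf K\mathsf K))$, and for $P\subseteq\Pi$ put $\eta P=\{\mathsf E\mathsf E\}^\perp\ast_\bullet{}^\perp P$. Then for all $P\subseteq\Pi$ and $L\subseteq\Lambda$: $$P\ast_\bullet L\subseteq P\ast L\subseteq P\ast_\perp L\subseteq P\,\clubsuit\,L\subseteq \eta P\ast_\bullet L\subseteq\eta P\ast L\subseteq\eta P\ast_\perp L.$$
   Context: An abstract Krivine structure $\mathcal K$ consists of sets $\Lambda$ (terms), $\Pi$ (stacks), a relation $\perp\subseteq\Lambda\times\Pi$ (write $t\perp\pi$), a map $\mathrm{push}:\Lambda\times\Pi\to\Pi$ written $t\cdot\pi$ (associating to the right), a map $\mathrm{app}:\Lambda\times\Lambda\to\Lambda$ written $ts$ (associating to the left), a subset $\mathrm{QP}\subseteq\Lambda$ closed under application, and $\mathsf K,\mathsf S\in\mathrm{QP}$ such that for all $t,s,u\in\Lambda$, $\pi\in\Pi$: (a) $t\perp s\cdot\pi$ implies $ts\perp\pi$; (b) $t\perp\pi$ implies $\mathsf K\perp t\cdot s\cdot\pi$; (c) $tu(su)\perp\pi$ implies $\mathsf S\perp t\cdot s\cdot u\cdot\pi$. Polars: $L^\perp=\{\pi:\forall t\in L,\ t\perp\pi\}$, ${}^\perp P=\{t:\forall\pi\in P,\ t\perp\pi\}$; $\overline P=({}^\perp P)^\perp$. Define $P\ast L=\{\pi: t\cdot\pi\in P\ \forall t\in L\}$, $P\ast_\perp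 L=\overline{P\ast L}$, $P\ast_\bullet L=\{\pi: t\cdot\pi'\in P\ \forall t\in L,\ \pi'\in\overline{\{\pi\}}\}$, $P\,\clubsuit\,L=(\{t\ell:t\in{}^\perp P,\ \ell\in L\})^\perp$. *)

theory Defs
  imports Main
begin

text \<open>Abstract Krivine structure: terms of type 'l, stacks of type 's.
  The sets Lambda and Pi are the full types. Parameters:
  orth (the pole relation t \<perp> pi), push (t . pi), app (t s), QP, K, S.\<close>

definition krivine_structure ::
  "('l \<Rightarrow> 's \<Rightarrow> bool) \<Rightarrow> ('l \<Rightarrow> 's \<Rightarrow> 's) \<Rightarrow> ('l \<Rightarrow> 'l \<Rightarrow> 'l) \<Rightarrow> 'l set \<Rightarrow> 'l \<Rightarrow> 'l \<Rightarrow> bool"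
where
  "krivine_structure orth push app QP K S \<longleftrightarrow>
     (\<forall>t\<in>QP. \<forall>s\<in>QP. app t s \<in> QP) \<and> K \<in> QP \<and> S \<in> QP \<and>
     (\<forall>t s \<pi>. orth t (push s \<pi>) \<longrightarrow> orth (app t s) \<pi>) \<and>
     (\<forall>t s \<pi>. orth t \<pi> \<longrightarrow> orth K (push t (push s \<pi>))) \<and>
     (\<forall>t s u \<pi>. orth (app (app t u) (app s u)) \<pi> \<longrightarrow> orth S (push t (push s (push u \<pi>))))"

definition polar_terms :: "('l \<Rightarrow> 's \<Rightarrow> bool) \<Rightarrow> 'l set \<Rightarrow> 's set" where
  "polar_terms orth L = {\<pi>. \<forall>t\<in>L. orth t \<pi>}"

definition polar_stacks :: "('l \<Rightarrow> 's \<Rightarrow> bool) \<Rightarrow> 's set \<Rightarrow> 'l set" where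
  "polar_stacks orth P = {t. \<forall>\<pi>\<in>P. orth t \<pi>}"

definition biclosure :: "('l \<Rightarrow> 's \<Rightarrow> bool) \<Rightarrow> 's set \<Rightarrow> 's set" where
  "biclosure orth P = polar_terms orth (polar_stacks orth P)"

definition arrow :: "('l \<Rightarrow> 's \<Rightarrow> 's) \<Rightarrow> 's set \<Rightarrow> 'l set \<Rightarrow> 's set" where
  "arrow push P L = {\<pi>. \<forall>t\<in>L. push t \<pi> \<in> P}"

definition arrow_perp :: "('l \<Rightarrow> 's \<Rightarrow> bool) \<Rightarrow> ('l \<Rightarrow> 's \<Rightarrow> 's) \<Rightarrow> 's set \<Rightarrow> 'l set \<Rightarrow> 's set" where
  "arrow_perp orth push P L = biclosure orth (arrow push P L)"

definition arrow_bullet :: "('l \<Rightarrow> 's \<Rightarrow> bool) \<Rightarrow> ('l \<Rightarrow> 's \<Rightarrow> 's) \<Rightarrow> 's set \<Rightarrow> 'l set \<Rightarrow> 's set" where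
  "arrow_bullet orth push P L =
     {\<pi>. \<forall>t\<in>L. \<forall>\<pi>'\<in>biclosure orth {\<pi>}. push t \<pi>' \<in> P}"

definition arrow_club :: "('l \<Rightarrow> 's \<Rightarrow> bool) \<Rightarrow> ('l \<Rightarrow> 'l \<Rightarrow> 'l) \<Rightarrow> 's set \<Rightarrow> 'l set \<Rightarrow> 's set" where
  "arrow_club orth app P L =
     polar_terms orth {app t l | t l. t \<in> polar_stacks orth P \<and> l \<in> L}"

end

theory Submission
  imports Defs
begin

theorem mainTheorem6:
  fixes orth :: "'l \<Rightarrow> 's \<Rightarrow> bool" and push :: "'l \<Rightarrow> 's \<Rightarrow> 's"
    and app :: "'l \<Rightarrow> 'l \<Rightarrow> 'l" and QP :: "'l set" and K S :: 'l
    and P :: "'s set" and L :: "'l set"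
  assumes "krivine_structure orth push app QP K S"
  defines "E \<equiv> app S (app K (app (app S K) K))"
  defines "\<eta>P \<equiv> arrow_bullet orth push (polar_terms orth {app E E}) (polar_stacks orth P)"
  shows "arrow_bullet orth push P L \<subseteq> arrow push P L \<and>
         arrow push P L \<subseteq> arrow_perp orth push P L \<and>
         arrow_perp orth push P L \<subseteq> arrow_club orth app P L \<and>
         arrow_club orth app P L \<subseteq> arrow_bullet orth push \<eta>P L \<and>
         arrow_bullet orth push \<eta>P L \<subseteq> arrow push \<eta>P L \<and>
         arrow push \<eta>P L \<subseteq> arrow_perp orth push \<eta>P L"
proof -
  have A: "\<And>t s \<pi>. orth t (push s \<pi>) \<Longrightarrow> orth (app t s) \<pi>"
   and Kr: "\<And>t s \<pi>. orth t \<pi> \<Longrightarrow> orth K (push t (push s \<pi>))"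
   and Sr: "\<And>t s u \<pi>. orth (app (app t u) (app s u)) \<pi> \<Longrightarrow> orth S (push t (push s (push u \<pi>)))"
    using assms(1) unfolding krivine_structure_def by blast+
  have I: "orth (app (app S K) K) (push u \<rho>)" if "orth u \<rho>" for u \<rho>
  proof -
    have "orth K (push u (push (app K u) \<rho>))" using Kr that by blast
    hence "orth (app (app K u) (app K u)) \<rho>" using A by blast
    hence "orth S (push K (push K (push u \<rho>)))" using Sr by blast
    thus ?thesis using A by blast
  qed
  have bicl: "\<And>X. X \<subseteq> biclosure orth X"
    unfolding biclosure_def polar_terms_def polar_stacks_def by blast
  have g1: "\<And>Q M. arrow_bullet orth push Q M \<subseteq> arrow push Q M"
    unfolding arrow_bullet_def arrow_def using bicl by blast
  have g2: "\<And>Q M. arrow push Q M \<subseteq> arrow_perp orth push Q M"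
    unfolding arrow_perp_def using bicl by blast
  have g3: "arrow_perp orth push P L \<subseteq> arrow_club orth app P L"
  proof
    fix \<pi> assume h: "\<pi> \<in> arrow_perp orth push P L"
    have "app t l \<in> polar_stacks orth (arrow push P L)" if "t \<in> polar_stacks orth P" "l \<in> L" for t l
      using that A unfolding polar_stacks_def arrow_def by blast
    thus "\<pi> \<in> arrow_club orth app P L" using h
      unfolding arrow_club_def arrow_perp_def biclosure_def polar_terms_def by blast
  qed
  have g4: "arrow_club orth app P L \<subseteq> arrow_bullet orth push \<eta>P L"
  proof
    fix \<pi> assume h: "\<pi> \<in> arrow_club orth app P L"
    show "\<pi> \<in> arrow_bullet orth push \<eta>P L"
      unfolding arrow_bullet_def
    proof (intro CollectI ballI)
      fix l \<pi>' assume l: "l \<in> L" and p': "\<pi>' \<in> biclosure orth {\<pi>}"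
      show "push l \<pi>' \<in> \<eta>P" unfolding \<eta>P_def arrow_bullet_def
      proof (intro CollectI ballI)
        fix t \<rho> assume t: "t \<in> polar_stacks orth P" and r: "\<rho> \<in> biclosure orth {push l \<pi>'}"
        have "orth (app t l) \<pi>" using h t l unfolding arrow_club_def polar_terms_def by blast
        hence tl: "orth (app t l) \<pi>'" using p'
          unfolding biclosure_def polar_terms_def polar_stacks_def by blast
        have "orth (app (app S K) K) (push (app t l) \<pi>')" using I tl .
        hence "orth K (push (app (app S K) K) (push l (push (app t l) \<pi>')))" using Kr by blast
        hence "orth (app K (app (app S K) K)) (push l (push (app t l) \<pi>'))" using A by blast
        hence "orth (app (app (app K (app (app S K) K)) l) (app t l)) \<pi>'" using A by blast
        hence "orth S (push (app K (app (app S K) K)) (push t (push l \<pi>')))" using Sr by blast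
        hence "orth E (push t (push l \<pi>'))" unfolding E_def using A by blast
        hence "orth (app E t) (push l \<pi>')" using A by blast
        hence Et: "orth (app E t) \<rho>" using r
          unfolding biclosure_def polar_terms_def polar_stacks_def by blast
        have "orth (app (app S K) K) (push (app E t) \<rho>)" using I Et .
        hence "orth K (push (app (app S K) K) (push t (push (app E t) \<rho>)))" using Kr by blast
        hence "orth (app K (app (app S K) K)) (push t (push (app E t) \<rho>))" using A by blast
        hence "orth (app (app (app K (app (app S K) K)) t) (app E t)) \<rho>" using A by blast
        hence "orth S (push (app K (app (app S K) K)) (push E (push t \<rho>)))" using Sr by blast
        hence "orth E (push E (push t \<rho>))" unfolding E_def using A by blast
        hence "orth (app E E) (push t \<rho>)" using A by blast
        thus "push t \<rho> \<in> polar_terms orth {app E E}" unfolding polar_terms_def by blast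
      qed
    qed
  qed
  show ?thesis using g1 g2 g3 g4 by blast
qed

end
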